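(* Let $n=2m-1$ be odd, fix $\boldsymbol{\rho}^0\in\mathcal{P}_n$ and $\alpha\in(0,\infty)$, and let $\mathbf{R}\sim\mathrm{Mallows}(\boldsymbol{\rho}^0,\alpha)$ with the footrule distance. For $i=1,\dots,n$ let $o^0_i$ be the item with $\rho^0_{o^0_i}=i$. Then the rank $R_{o^0_m}$ of the middle-ranked item is symmetrically distributed about $m$, i.e., for all $k=1,\dots,m-1$, $$P(R_{o^0_m}=m-k\mid\boldsymbol{\rho}^0,\alpha)=P(R_{o^0_m}=m+k\mid\boldsymbol{\rho}^0,\alpha).$$
   Context: $\mathcal{P}_n$ denotes the set of permutations of $\{1,\dots,n\}$; a ranking $\mathbf{r}\in\mathcal{P}_n$ assigns rank $r_i$ to item $i$. The footrule distance is $d(\mathbf{r},\boldsymbol{\rho})=\sum_{i=1}^n|r_i-\rho_i|$. The Mallows distribution $\mathrm{Mallows}(\boldsymbol{\rho}^0,\alpha)$ on $\mathcal{P}_n$ has probability mass function $P(\mathbf{R}=\mathbf{r}\mid\boldsymbol{\rho}^0,\alpha)=\frac{1}{Z_n(\alpha)}\exp\{-\frac{\alpha}{n}d(\mathbf{r},\boldsymbol{\rho}^0)\}$ with normalizing constant $Z_n(\alpha)$. *)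

theory Defs
  imports Complex_Main "HOL-Combinatorics.Permutations"
begin

text \<open>Rankings of n items: permutations of {1..n}; r i is the rank of item i.\<close>
definition rankings :: "nat \<Rightarrow> (nat \<Rightarrow> nat) set" where
  "rankings n = {r. r permutes {1..n}}"

definition footrule :: "nat \<Rightarrow> (nat \<Rightarrow> nat) \<Rightarrow> (nat \<Rightarrow> nat) \<Rightarrow> real" where
  "footrule n r \<rho> = (\<Sum>i\<in>{1..n}. \<bar>real (r i) - real (\<rho> i)\<bar>)"

definition mallows_weight :: "nat \<Rightarrow> (nat \<Rightarrow> nat) \<Rightarrow> real \<Rightarrow> (nat \<Rightarrow> nat) \<Rightarrow> real" where
  "mallows_weight n \<rho> \<alpha> r = exp (- (\<alpha> / real n) * footrule n r \<rho>)"

definition mallows_Z :: "nat \<Rightarrow> (nat \<Rightarrow> nat) \<Rightarrow> real \<Rightarrow> real" where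
  "mallows_Z n \<rho> \<alpha> = (\<Sum>r\<in>rankings n. mallows_weight n \<rho> \<alpha> r)"

definition mallows_prob :: "nat \<Rightarrow> (nat \<Rightarrow> nat) \<Rightarrow> real \<Rightarrow> ((nat \<Rightarrow> nat) \<Rightarrow> bool) \<Rightarrow> real" where
  "mallows_prob n \<rho> \<alpha> A =
     (\<Sum>r\<in>{r\<in>rankings n. A r}. mallows_weight n \<rho> \<alpha> r) / mallows_Z n \<rho> \<alpha>"

end

theory Submission
  imports Defs
begin

lemma invol_permutes:
  assumes "\<And>x. s (s x) = x" "\<And>x. x \<notin> S \<Longrightarrow> s x = x"
  shows "s permutes S"
  unfolding permutes_def using assms by metis

theorem mainTheorem3:
  fixes n m :: nat and \<rho>0 :: "nat \<Rightarrow> nat" and \<alpha> :: real and om :: nat and k :: nat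
  assumes "m \<ge> 1" and "n = 2 * m - 1"
    and "\<rho>0 \<in> rankings n"
    and "\<alpha> > 0"
    and "om \<in> {1..n}" and "\<rho>0 om = m"
    and "k \<in> {1..m - 1}"
  shows "mallows_prob n \<rho>0 \<alpha> (\<lambda>r. r om = m - k) = mallows_prob n \<rho>0 \<alpha> (\<lambda>r. r om = m + k)"
proof -
  define S where "S = {1..n}"
  have rp: "\<rho>0 permutes S" using assms(3) by (simp add: rankings_def S_def)
  define \<sigma> where "\<sigma> = (\<lambda>j::nat. if j \<in> S then n + 1 - j else j)"
  have \<sigma>\<sigma>: "\<sigma> (\<sigma> x) = x" for x by (auto simp: \<sigma>_def S_def)
  have \<sigma>p: "\<sigma> permutes S"
    by (rule invol_permutes[OF \<sigma>\<sigma>]) (simp add: \<sigma>_def)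
  define \<pi> where "\<pi> = inv \<rho>0 \<circ> \<sigma> \<circ> \<rho>0"
  have \<pi>p: "\<pi> permutes S" unfolding \<pi>_def
    by (intro permutes_compose permutes_inv rp \<sigma>p)
  have \<pi>\<pi>: "\<pi> (\<pi> x) = x" for x
    by (simp add: \<pi>_def permutes_inverses[OF rp] \<sigma>\<sigma>)
  have \<pi>om: "\<pi> om = om"
  proof -
    have "\<sigma> m = m" using assms(1,2) by (auto simp: \<sigma>_def S_def)
    hence "\<pi> om = inv \<rho>0 (\<rho>0 om)" by (simp add: \<pi>_def assms(6))
    thus ?thesis by (simp only: permutes_inverses[OF rp])
  qed
  have \<rho>\<pi>: "\<rho>0 (\<pi> i) = \<sigma> (\<rho>0 i)" for i
    by (simp add: \<pi>_def permutes_inverses[OF rp])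
  define \<Phi> where "\<Phi> = (\<lambda>r. \<sigma> \<circ> r \<circ> \<pi>)"
  have \<Phi>rk: "\<Phi> r \<in> rankings n" if "r \<in> rankings n" for r
    using that unfolding \<Phi>_def rankings_def S_def[symmetric]
    by (auto intro!: permutes_compose \<pi>p \<sigma>p)
  have \<Phi>\<Phi>: "\<Phi> (\<Phi> r) = r" for r
    by (simp add: \<Phi>_def fun_eq_iff \<sigma>\<sigma> \<pi>\<pi>)
  have \<Phi>om: "\<Phi> r om = n + 1 - r om" if "r \<in> rankings n" for r
  proof -
    have "r om \<in> S" using that assms(5) permutes_in_image
      by (fastforce simp: rankings_def S_def)
    thus ?thesis by (simp add: \<Phi>_def \<pi>om \<sigma>_def)
  qed
  have \<Phi>w: "mallows_weight n \<rho>0 \<alpha> (\<Phi> r) = mallows_weight n \<rho>0 \<alpha> r" if "r \<in> rankings n" for r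
  proof -
    have rpS: "r permutes S" using that by (simp add: rankings_def S_def)
    have "footrule n r \<rho>0 = (\<Sum>i\<in>S. \<bar>real (r i) - real (\<rho>0 i)\<bar>)"
      by (simp add: footrule_def S_def)
    also have "\<dots> = (\<Sum>i\<in>S. \<bar>real (r (\<pi> i)) - real (\<rho>0 (\<pi> i))\<bar>)"
      using sum.permute[OF \<pi>p, of "\<lambda>i. \<bar>real (r i) - real (\<rho>0 i)\<bar>"] by (simp add: o_def)
    also have "\<dots> = (\<Sum>i\<in>S. \<bar>real (\<Phi> r i) - real (\<rho>0 i)\<bar>)"
    proof (rule sum.cong[OF refl])
      fix i assume i: "i \<in> S"
      have a: "r (\<pi> i) \<in> S" using i permutes_in_image[OF \<pi>p] permutes_in_image[OF rpS] by blast
      have b: "\<rho>0 i \<in> S" using i permutes_in_image[OF rp] by blast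
      have "\<Phi> r i = n + 1 - r (\<pi> i)" using a by (simp add: \<Phi>_def \<sigma>_def)
      moreover have "\<rho>0 (\<pi> i) = n + 1 - \<rho>0 i" using b by (simp add: \<rho>\<pi> \<sigma>_def)
      ultimately show "\<bar>real (r (\<pi> i)) - real (\<rho>0 (\<pi> i))\<bar> = \<bar>real (\<Phi> r i) - real (\<rho>0 i)\<bar>"
        using a b by (auto simp: S_def of_nat_diff)
    qed
    also have "\<dots> = footrule n (\<Phi> r) \<rho>0" by (simp add: footrule_def S_def)
    finally show ?thesis by (simp add: mallows_weight_def)
  qed
  have km: "k < m" "1 \<le> k" using assms(7) by auto
  have "(\<Sum>r\<in>{r\<in>rankings n. r om = m - k}. mallows_weight n \<rho>0 \<alpha> r)
      = (\<Sum>r\<in>{r\<in>rankings n. r om = m + k}. mallows_weight n \<rho>0 \<alpha> r)"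
  proof (rule sum.reindex_bij_witness[where i = \<Phi> and j = \<Phi>])
    fix a assume a: "a \<in> {r \<in> rankings n. r om = m - k}"
    show "\<Phi> (\<Phi> a) = a" by (rule \<Phi>\<Phi>)
    show "\<Phi> a \<in> {r \<in> rankings n. r om = m + k}" using a \<Phi>rk \<Phi>om assms(2) km by auto
    show "mallows_weight n \<rho>0 \<alpha> (\<Phi> a) = mallows_weight n \<rho>0 \<alpha> a" using a \<Phi>w by auto
  next
    fix b assume b: "b \<in> {r \<in> rankings n. r om = m + k}"
    show "\<Phi> (\<Phi> b) = b" by (rule \<Phi>\<Phi>)
    show "\<Phi> b \<in> {r \<in> rankings n. r om = m - k}" using b \<Phi>rk \<Phi>om assms(2) km by auto
  qed
  thus ?thesis by (simp add: mallows_prob_def)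
qed

end
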